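(* Let $k\ge1$, $r>0$, $n\ge1$, $x_j=j/n$. For any $0<\delta<1$, any $S\in W_r^k$ and any function (estimate) $\hat S_n$ defined at the points $x_1,\dots,x_n$, $$\|\hat S_n-S\|_n^2\ge(1-\delta)\|T_n(\hat S)-S\|^2-(\delta^{-1}-1)\,r/n^2,$$ where $T_n(\hat S)(x)=\sum_{k=1}^n\hat S_n(x_k)\mathbf 1_{(x_{k-1},x_k]}(x)$.
   Context: $\|f\|_n^2=\frac1n\sum_{j=1}^nf^2(x_j)$; $\|f\|^2=\int_0^1f^2(t)dt$; $x_0=0$. $W_r^k$: set of 1-periodic $k$ times differentiable $f:\mathbb R\to\mathbb R$ with $\sum_{j=0}^k\|f^{(j)}\|^2\le r$. *)

theory Defs
  imports "HOL-Analysis.Analysis"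
begin

definition emp_norm2 :: "nat \<Rightarrow> (real \<Rightarrow> real) \<Rightarrow> real" where
  "emp_norm2 n f = (1 / real n) * (\<Sum>j=1..n. (f (real j / real n))^2)"

definition L2_norm2 :: "(real \<Rightarrow> real) \<Rightarrow> real" where
  "L2_norm2 f = integral {0..1} (\<lambda>t. (f t)^2)"

definition k_times_differentiable :: "nat \<Rightarrow> (real \<Rightarrow> real) \<Rightarrow> bool" where
  "k_times_differentiable k f \<longleftrightarrow> (\<forall>j<k. \<forall>x. (deriv ^^ j) f differentiable (at x))"

definition W :: "real \<Rightarrow> nat \<Rightarrow> (real \<Rightarrow> real) set" where
  "W r k = {f. (\<forall>x. f (x + 1) = f x) \<and> k_times_differentiable k f \<and>
              (\<forall>j\<le>k. (\<lambda>t. ((deriv ^^ j) f t)^2) integrable_on {0..1}) \<and>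
              (\<Sum>j=0..k. L2_norm2 ((deriv ^^ j) f)) \<le> r}"

definition T_n :: "nat \<Rightarrow> (real \<Rightarrow> real) \<Rightarrow> real \<Rightarrow> real" where
  "T_n n Sh x = (\<Sum>j=1..n. Sh (real j / real n) *
                    indicator {real (j - 1) / real n <.. real j / real n} x)"

end

theory Submission
  imports Defs
begin

lemma grid_combine:
  fixes h :: "real \<Rightarrow> real"
  assumes n: "n \<ge> 1"
    and H: "\<And>j. j \<in> {1..m} \<Longrightarrow> (h has_integral c j) {real (j-1)/real n .. real j/real n}"
  shows "(h has_integral (\<Sum>j=1..m. c j)) {0..real m / real n}"
  using H
proof (induction m)
  case 0
  then show ?case using has_integral_refl(2)[of h 0] by simp
next
  case (Suc m)
  have a: "(h has_integral (\<Sum>j=1..m. c j)) {0..real m / real n}"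
    using Suc by auto
  have b: "(h has_integral c (Suc m)) {real m/real n .. real (Suc m)/real n}"
    using Suc.prems[of "Suc m"] by simp
  have "(h has_integral ((\<Sum>j=1..m. c j) + c (Suc m))) {0..real (Suc m) / real n}"
    by (rule has_integral_combine[OF _ _ a b]) (use n in \<open>auto simp: divide_right_mono\<close>)
  then show ?case by simp
qed

lemma key_ineq:
  fixes a b d :: real
  assumes "0 < d" "d < 1"
  shows "(1 - d) * (a + b)^2 \<le> a^2 + (1/d - 1) * b^2"
proof -
  have e1: "d*(a^2 + (1/d-1)*b^2) = d*a^2 + (1-d)*b^2" using assms by (simp add: field_simps)
  have e2: "d*a^2 + (1-d)*b^2 - d*((1-d)*(a+b)^2) = (d*a-(1-d)*b)^2"
    by (simp add: power2_eq_square; algebra)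
  have "d * ((1 - d) * (a + b)^2) \<le> d * (a^2 + (1/d - 1) * b^2)"
    using e1 e2 zero_le_power2[of "d*a-(1-d)*b"] by linarith
  then show ?thesis using assms by (simp add: mult_le_cancel_left_pos)
qed
lemma cs_int:
  fixes f :: "real \<Rightarrow> real"
  assumes ab: "a \<le> b" and I: "(f has_integral I) {a..b}"
    and J: "((\<lambda>t. (f t)^2) has_integral J) {a..b}"
  shows "I^2 \<le> (b - a) * J"
proof (cases "a = b")
  case True
  then have "I = 0" using I has_integral_refl(2) has_integral_unique by (metis atLeastAtMost_singleton)
  then show ?thesis using True by simp
next
  case False
  define L where "L = b - a"
  have L: "L > 0" using ab False L_def by simp
  define c where "c = I / L"
  have h1: "((\<lambda>t. (f t)^2 - 2*c * f t + c^2) has_integral (J - 2*c*I + L * c^2)) {a..b}"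
    using has_integral_add[OF has_integral_diff[OF J has_integral_cmul[OF I, of "2*c"]]
        has_integral_const_real[of "c^2" a b]] ab by (simp add: L_def)
  have eqf: "(\<lambda>t. (f t)^2 - 2*c * f t + c^2) = (\<lambda>t. (f t - c)^2)"
    by (rule ext) (simp add: power2_eq_square algebra_simps)
  have h2: "((\<lambda>t. (f t - c)^2) has_integral (J - 2*c*I + L * c^2)) {a..b}"
    using h1 unfolding eqf .
  have "0 \<le> J - 2*c*I + L * c^2"
    by (rule has_integral_nonneg[OF h2]) simp
  also have "J - 2*c*I + L * c^2 = J - I^2 / L"
  proof -
    have "L * c^2 = I^2/L" using L by (simp add: c_def power2_eq_square)
    moreover have "2*c*I = 2 * (I^2/L)" by (simp add: c_def power2_eq_square)
    ultimately show ?thesis by simp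
  qed
  finally have "I^2 / L \<le> J" by simp
  then have "I^2 \<le> J * L" using L by (simp add: divide_le_eq)
  then show ?thesis by (simp add: L_def mult.commute)
qed
lemma T_val:
  assumes n: "n \<ge> 1" and j: "j \<in> {1..n}"
    and t: "real (j-1)/real n < t" "t \<le> real j / real n"
  shows "T_n n Sh t = Sh (real j / real n)"
proof -
  have np: "real n > 0" using n by simp
  have ind: "indicator {real (i - 1) / real n <.. real i / real n} t = (if i = j then 1 else (0::real))"
    if i: "i \<in> {1..n}" for i
  proof (cases "i = j")
    case True then show ?thesis using t by (simp add: indicator_def)
  next
    case False
    show ?thesis
    proof (cases "i < j")
      case True
      then have "real i \<le> real (j - 1)" by simp
      then have "real i / real n \<le> real (j-1) / real n" using np by (simp add: divide_right_mono)
      then show ?thesis using t False by (simp add: indicator_def)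
    next
      case False2: False
      then have "real j \<le> real (i - 1)" using \<open>i \<noteq> j\<close> by simp
      then have "real j / real n \<le> real (i-1) / real n" using np by (simp add: divide_right_mono)
      then show ?thesis using t \<open>i \<noteq> j\<close> by (simp add: indicator_def)
    qed
  qed
  have "T_n n Sh t = (\<Sum>i=1..n. Sh (real i / real n) * (if i = j then 1 else 0))"
    unfolding T_n_def by (rule sum.cong[OF refl], subst ind) auto
  also have "\<dots> = Sh (real j / real n)" using j by (simp add: if_distrib sum.delta cong: if_cong)
  finally show ?thesis .
qed
theorem lemma8p1:
  fixes k n :: nat and r \<delta> :: real and S Sh :: "real \<Rightarrow> real"
  assumes "k \<ge> 1" and "r > 0" and "n \<ge> 1"
    and "0 < \<delta>" and "\<delta> < 1"
    and "S \<in> W r k"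
  shows "emp_norm2 n (\<lambda>x. Sh x - S x)
           \<ge> (1 - \<delta>) * L2_norm2 (\<lambda>x. T_n n Sh x - S x) - (1 / \<delta> - 1) * r / (real n)^2"
proof -
  define x where "x = (\<lambda>j::nat. real j / real n)"
  define f where "f = deriv S"
  define a where "a = (\<lambda>j. Sh (x j) - S (x j))"
  define C where "C = (\<lambda>j. integral {x (j-1)..x j} (\<lambda>t. (f t)^2))"
  define A where "A = (\<lambda>j. integral {x (j-1)..x j} (\<lambda>t. (a j + (S (x j) - S t))^2))"
  have np: "real n > 0" using assms by simp
  have W: "\<forall>j<k. \<forall>x. (deriv ^^ j) S differentiable (at x)"
      "\<forall>j\<le>k. (\<lambda>t. ((deriv ^^ j) S t)^2) integrable_on {0..1}"
      "(\<Sum>j=0..k. L2_norm2 ((deriv ^^ j) S)) \<le> r"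
    using assms(6) unfolding W_def k_times_differentiable_def by auto
  have Sd: "\<And>y. S differentiable (at y)" using W(1) assms(1) by (metis funpow_0 less_le_trans zero_less_one)
  have Sder: "\<And>y. (S has_real_derivative f y) (at y)"
    using Sd by (simp add: f_def DERIV_deriv_iff_real_differentiable)
  have Scont: "continuous_on UNIV S"
    using Sd by (simp add: differentiable_imp_continuous_within continuous_at_imp_continuous_on)
  have f2: "(\<lambda>t. (f t)^2) integrable_on {0..1}" using W(2) assms(1) by (auto simp: f_def)
  have L2nn: "0 \<le> L2_norm2 ((deriv ^^ j) S)" if "j \<le> k" for j
    unfolding L2_norm2_def using W(2) that by (intro integral_nonneg) auto
  have "L2_norm2 ((deriv ^^ 1) S) \<le> (\<Sum>j=0..k. L2_norm2 ((deriv ^^ j) S))"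
    by (rule member_le_sum) (use assms(1) L2nn in auto)
  then have Lf: "integral {0..1} (\<lambda>t. (f t)^2) \<le> r" using W(3) by (simp add: L2_norm2_def f_def)
  have xs: "x (j-1) \<le> x j" "0 \<le> x (j-1)" "x j \<le> 1" "x j - x (j-1) = 1 / real n"
    if "j \<in> {1..n}" for j
    using that np by (auto simp: x_def divide_right_mono field_simps of_nat_diff)
  have FTC: "(f has_integral (S (x j) - S t)) {t..x j}" if "t \<le> x j" for t j
    by (rule fundamental_theorem_of_calculus[OF that])
       (use Sder in \<open>auto simp: has_real_derivative_iff_has_vector_derivative[symmetric] intro: has_field_derivative_at_within\<close>)
  have Cj: "((\<lambda>t. (f t)^2) has_integral C j) {x (j-1)..x j}" if "j \<in> {1..n}" for j
    unfolding C_def using xs[OF that] by (intro integrable_integral integrable_on_subinterval[OF f2]) auto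
  have Cnn: "0 \<le> C j" if "j \<in> {1..n}" for j
    by (rule has_integral_nonneg[OF Cj[OF that]]) simp
  have bnd: "(S (x j) - S t)^2 \<le> C j / real n" if j: "j \<in> {1..n}" and t: "t \<in> {x (j-1)..x j}" for j t
  proof -
    have sub: "{t..x j} \<subseteq> {0..1}" "{t..x j} \<subseteq> {x (j-1)..x j}" using t xs[OF j] by auto
    have int: "(\<lambda>t. (f t)^2) integrable_on {t..x j}" by (rule integrable_on_subinterval[OF f2 sub(1)])
    have "(S (x j) - S t)^2 \<le> (x j - t) * integral {t..x j} (\<lambda>t. (f t)^2)"
      by (rule cs_int[OF _ FTC]) (use t int in auto)
    also have "\<dots> \<le> (1 / real n) * C j"
    proof (rule mult_mono)
      show "x j - t \<le> 1 / real n" using t xs[OF j] by auto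
      show "integral {t..x j} (\<lambda>t. (f t)^2) \<le> C j"
        unfolding C_def using integral_subset_le[OF sub(2) int] Cj[OF j] by auto
      show "0 \<le> 1 / real n" by simp
      show "0 \<le> integral {t..x j} (\<lambda>t. (f t)^2)" using int by (intro integral_nonneg) auto
    qed
    finally show ?thesis by simp
  qed
  have Aj: "((\<lambda>t. (T_n n Sh t - S t)^2) has_integral A j) {x (j-1)..x j}" if j: "j \<in> {1..n}" for j
  proof (rule has_integral_spike_finite[of "{x (j-1)}"])
    show "((\<lambda>t. (a j + (S (x j) - S t))^2) has_integral A j) {x (j-1)..x j}"
      unfolding A_def
      by (intro integrable_integral integrable_continuous_interval continuous_intros
            continuous_on_subset[OF Scont]) auto
    fix t assume "t \<in> {x (j-1)..x j} - {x (j-1)}"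
    then have "x (j-1) < t" "t \<le> x j" by auto
    then have "T_n n Sh t = Sh (x j)" using T_val[OF assms(3) j] by (simp add: x_def)
    then show "(T_n n Sh t - S t)^2 = (a j + (S (x j) - S t))^2" by (simp add: a_def)
  qed auto
  have Abnd: "(1 - \<delta>) * A j \<le> (a j)^2 / real n + (1/\<delta> - 1) * C j / (real n)^2" if j: "j \<in> {1..n}" for j
  proof -
    have "((\<lambda>t. (1 - \<delta>) * (a j + (S (x j) - S t))^2) has_integral (1 - \<delta>) * A j) {x (j-1)..x j}"
      unfolding A_def
      by (intro has_integral_mult_right integrable_integral integrable_continuous_interval continuous_intros
            continuous_on_subset[OF Scont]) auto
    moreover have "((\<lambda>t. (a j)^2 + (1/\<delta> - 1) * (C j / real n)) has_integral
        (x j - x (j-1)) * ((a j)^2 + (1/\<delta> - 1) * (C j / real n))) {x (j-1)..x j}"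
      using has_integral_const_real[of "(a j)^2 + (1/\<delta> - 1) * (C j / real n)" "x (j-1)" "x j"] xs[OF j] by simp
    ultimately have "(1 - \<delta>) * A j \<le> (x j - x (j-1)) * ((a j)^2 + (1/\<delta> - 1) * (C j / real n))"
    proof (rule has_integral_le)
      fix t assume t: "t \<in> {x (j-1)..x j}"
      have "(1 - \<delta>) * (a j + (S (x j) - S t))^2 \<le> (a j)^2 + (1/\<delta> - 1) * (S (x j) - S t)^2"
        by (rule key_ineq) (use assms in auto)
      also have "\<dots> \<le> (a j)^2 + (1/\<delta> - 1) * (C j / real n)"
        using bnd[OF j t] assms(4,5) by (intro add_left_mono mult_left_mono) (auto simp: field_simps)
      finally show "(1 - \<delta>) * (a j + (S (x j) - S t))^2 \<le> (a j)^2 + (1/\<delta> - 1) * (C j / real n)" .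
    qed
    also have "\<dots> = (a j)^2 / real n + (1/\<delta> - 1) * C j / (real n)^2"
      using xs[OF j] by (simp add: power2_eq_square add_divide_distrib)
    finally show ?thesis .
  qed
  have "((\<lambda>t. (T_n n Sh t - S t)^2) has_integral (\<Sum>j=1..n. A j)) {0..real n / real n}"
    by (rule grid_combine[OF assms(3)]) (use Aj in \<open>simp add: x_def\<close>)
  then have L2eq: "L2_norm2 (\<lambda>x. T_n n Sh x - S x) = (\<Sum>j=1..n. A j)"
    using np unfolding L2_norm2_def by (simp add: integral_unique)
  have "((\<lambda>t. (f t)^2) has_integral (\<Sum>j=1..n. C j)) {0..real n / real n}"
    by (rule grid_combine[OF assms(3)]) (use Cj in \<open>simp add: x_def\<close>)
  then have Ceq: "(\<Sum>j=1..n. C j) = integral {0..1} (\<lambda>t. (f t)^2)"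
    using np by (simp add: integral_unique)
  have "(1 - \<delta>) * L2_norm2 (\<lambda>x. T_n n Sh x - S x) = (\<Sum>j=1..n. (1 - \<delta>) * A j)"
    by (simp add: L2eq sum_distrib_left)
  also have "\<dots> \<le> (\<Sum>j=1..n. (a j)^2 / real n + (1/\<delta> - 1) * C j / (real n)^2)"
    by (rule sum_mono) (rule Abnd)
  also have "\<dots> = emp_norm2 n (\<lambda>x. Sh x - S x) + (1/\<delta> - 1) * (\<Sum>j=1..n. C j) / (real n)^2"
    by (simp add: emp_norm2_def sum.distrib sum_divide_distrib[symmetric] sum_distrib_left a_def x_def)
  also have "\<dots> \<le> emp_norm2 n (\<lambda>x. Sh x - S x) + (1/\<delta> - 1) * r / (real n)^2"
  proof -
    have "0 \<le> 1/\<delta> - 1" using assms(4,5) by (simp add: field_simps)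
    then have "(1/\<delta> - 1) * (\<Sum>j=1..n. C j) \<le> (1/\<delta> - 1) * r" using Ceq Lf by (intro mult_left_mono) auto
    then show ?thesis by (simp add: divide_right_mono)
  qed
  finally show ?thesis by simp
qed
end
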